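(* Let $q$ be a prime, let $d=\pi(q-1)$, let $p_1<\dots<p_d$ be the primes less than $q$, and for $n\in\{1,\dots,q-1\}$ with $n=\prod_{i=1}^d p_i^{\mu_i(n)}$ define the linear form $\mathscr{L}_n:\mathbb{F}_q^d\to\mathbb{F}_q$, $\mathscr{L}_n(\mathbf{v})=\sum_{i=1}^d\mu_i(n)v_i$. Let $k\in\mathbb{N}$. (a) If $n_1,\dots,n_k\in\{1,\dots,q-1\}$ are multiplicatively dependent, then $\mathscr{L}_{n_1},\dots,\mathscr{L}_{n_k}$ are $\mathbb{F}_q$-dependent. (b) Suppose $k<\frac{\log q}{10\log_2 q}$. Then $n_1,\dots,n_k\in\{2,3,\dots,q-1\}$ are multiplicatively independent if and only if $\mathscr{L}_{n_1},\dots,\mathscr{L}_{n_k}$ are $\mathbb{F}_q$-independent.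
   Context: Integers $n_1,\dots,n_r$ are multiplicatively independent if $\alpha_1=\dots=\alpha_r=0$ is the only integer solution of $n_1^{\alpha_1}\cdots n_r^{\alpha_r}=1$, and multiplicatively dependent otherwise. Forms $\mathscr{L}_{n_1},\dots,\mathscr{L}_{n_k}$ are $\mathbb{F}_q$-independent if $\alpha_1\mathscr{L}_{n_1}+\dots+\alpha_k\mathscr{L}_{n_k}=0$ (as a function on $\mathbb{F}_q^d$) with $\alpha_i\in\mathbb{F}_q$ forces all $\alpha_i=0$, and $\mathbb{F}_q$-dependent otherwise. $\log x:=\max\{\ln x,2\}$, $\log_2 x=\log\log x$; $\pi(x)$ is the number of primes $\le x$. *)

theory Defs
  imports Complex_Main "HOL-Computational_Algebra.Primes"
begin

text \<open>The paper's logarithm: log x := max (ln x) 2, and log_2 x := log (log x).\<close>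
definition plog :: "real \<Rightarrow> real" where
  "plog x = max (ln x) 2"

definition plog2 :: "real \<Rightarrow> real" where
  "plog2 x = plog (plog x)"

text \<open>Elements of F_q are represented by the integers 0..q-1 with arithmetic mod q.
  Vectors of F_q^d are indexed by the primes p < q (coordinate p_i = coordinate i).\<close>
definition Lform :: "nat \<Rightarrow> nat \<Rightarrow> (nat \<Rightarrow> int) \<Rightarrow> int" where
  "Lform q n v = (\<Sum>p\<in>{p. prime p \<and> p < q}. int (multiplicity p n) * v p) mod int q"

definition Fq_dependent :: "nat \<Rightarrow> nat \<Rightarrow> (nat \<Rightarrow> nat) \<Rightarrow> bool" where
  "Fq_dependent q k n =
     (\<exists>\<alpha>::nat \<Rightarrow> int. (\<forall>i<k. \<alpha> i \<in> {0..<int q}) \<and> (\<exists>i<k. \<alpha> i \<noteq> 0) \<and>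
        (\<forall>v::nat \<Rightarrow> int. (\<forall>p. v p \<in> {0..<int q}) \<longrightarrow>
            (\<Sum>i<k. \<alpha> i * Lform q (n i) v) mod int q = 0))"

definition Fq_independent :: "nat \<Rightarrow> nat \<Rightarrow> (nat \<Rightarrow> nat) \<Rightarrow> bool" where
  "Fq_independent q k n = (\<not> Fq_dependent q k n)"

definition mult_dependent :: "nat \<Rightarrow> (nat \<Rightarrow> nat) \<Rightarrow> bool" where
  "mult_dependent k n =
     (\<exists>\<alpha>::nat \<Rightarrow> int. (\<exists>i<k. \<alpha> i \<noteq> 0) \<and> (\<Prod>i<k. real (n i) powi \<alpha> i) = 1)"

definition mult_independent :: "nat \<Rightarrow> (nat \<Rightarrow> nat) \<Rightarrow> bool" where
  "mult_independent k n = (\<not> mult_dependent k n)"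

end

theory Submission
  imports Defs "Jordan_Normal_Form.Determinant"
begin


lemma powi_split:
  fixes x :: real and b :: int assumes "x > 0"
  shows "x powi b = x ^ nat (max b 0) / x ^ nat (max (-b) 0)"
  using assms by (auto simp: power_int_def field_simps)

lemma mult_prod:
  fixes p :: nat and f :: "nat \<Rightarrow> nat"
  assumes "prime p" "\<And>i. i < k \<Longrightarrow> f i > 0"
  shows "multiplicity p (\<Prod>i<k. f i ^ a i) = (\<Sum>i<k. a i * multiplicity p (f i))"
proof -
  have "multiplicity p (\<Prod>i<k. f i ^ a i) = (\<Sum>i<k. multiplicity p (f i ^ a i))"
    by (rule prime_elem_multiplicity_prod_distrib) (use assms in \<open>auto dest!: assms(2)\<close>)
  also have "\<dots> = (\<Sum>i<k. a i * multiplicity p (f i))"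
    by (rule sum.cong) (use assms in \<open>auto intro!: prime_elem_multiplicity_power_distrib\<close>)
  finally show ?thesis .
qed

lemma mult_rel:
  fixes n :: "nat \<Rightarrow> nat" and \<beta> :: "nat \<Rightarrow> int"
  assumes "\<And>i. i < k \<Longrightarrow> n i > 0"
  shows "(\<Prod>i<k. real (n i) powi \<beta> i) = 1 \<longleftrightarrow>
    (\<forall>p. prime p \<longrightarrow> (\<Sum>i<k. \<beta> i * int (multiplicity p (n i))) = 0)"
proof -
  define a where "a i = nat (max (\<beta> i) 0)" for i
  define b where "b i = nat (max (- \<beta> i) 0)" for i
  define A where "A = (\<Prod>i<k. n i ^ a i)"
  define B where "B = (\<Prod>i<k. n i ^ b i)"
  have Bpos: "B > 0" unfolding B_def using assms by (force intro!: prod_pos)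
  have Apos: "A > 0" unfolding A_def using assms by (force intro!: prod_pos)
  have "(\<Prod>i<k. real (n i) powi \<beta> i) = (\<Prod>i<k. real (n i) ^ a i / real (n i) ^ b i)"
    by (rule prod.cong) (use assms in \<open>auto simp: a_def b_def intro!: powi_split\<close>)
  also have "\<dots> = real A / real B"
    by (simp add: A_def B_def prod_dividef)
  finally have 1: "(\<Prod>i<k. real (n i) powi \<beta> i) = 1 \<longleftrightarrow> A = B"
    using Bpos by auto
  have 2: "A = B \<longleftrightarrow> (\<forall>p. prime p \<longrightarrow> multiplicity p A = multiplicity p B)"
    using multiplicity_eq_imp_eq[of A B] Apos Bpos by auto
  have 3: "multiplicity p A = multiplicity p B \<longleftrightarrow>
      (\<Sum>i<k. \<beta> i * int (multiplicity p (n i))) = 0" if "prime p" for p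
  proof -
    have "int (multiplicity p A) - int (multiplicity p B) = (\<Sum>i<k. (int (a i) - int (b i)) * int (multiplicity p (n i)))"
      unfolding A_def B_def using mult_prod[OF that assms]
      by (simp add: sum_subtractf left_diff_distrib)
    also have "\<dots> = (\<Sum>i<k. \<beta> i * int (multiplicity p (n i)))"
      by (rule sum.cong) (auto simp: a_def b_def)
    finally show ?thesis by linarith
  qed
  show ?thesis using 1 2 3 by auto
qed

lemma part_a:
  fixes q k :: nat and n :: "nat \<Rightarrow> nat"
  assumes q: "prime q" and nr: "\<forall>i<k. n i \<in> {1..q-1}" and md: "mult_dependent k n"
  shows "Fq_dependent q k n"
proof -
  from md obtain \<alpha> where a0: "\<exists>i<k. \<alpha> i \<noteq> 0" and ap: "(\<Prod>i<k. real (n i) powi \<alpha> i) = 1"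
    unfolding mult_dependent_def by blast
  have npos: "\<And>i. i < k \<Longrightarrow> n i > 0" using nr by auto
  have rel: "\<And>p. prime p \<Longrightarrow> (\<Sum>i<k. \<alpha> i * int (multiplicity p (n i))) = 0"
    using mult_rel[of k n \<alpha>, OF npos] ap by auto
  define g where "g = Gcd (\<alpha> ` {..<k})"
  have g0: "g \<noteq> 0" unfolding g_def using a0 by (auto simp: Gcd_0_iff)
  have gd: "g dvd \<alpha> i" if "i < k" for i unfolding g_def using that by (auto intro: Gcd_dvd)
  define a' where "a' i = \<alpha> i div g" for i
  have aa: "\<alpha> i = g * a' i" if "i < k" for i using gd[OF that] unfolding a'_def by simp
  have ex: "\<exists>i<k. \<not> int q dvd a' i"
  proof (rule ccontr)
    assume "\<not> ?thesis"
    then have gq: "g * int q dvd \<alpha> i" if "i < k" for i using aa[OF that] that by auto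
    have "g * int q dvd g" unfolding g_def by (rule Gcd_greatest) (use gq in \<open>auto simp: g_def\<close>)
    then have "g * int q dvd g * 1" by simp
    then have "int q dvd 1" using g0 by (subst (asm) dvd_mult_cancel_left) auto
    then show False using q by (simp add: prime_gt_1_nat)
  qed
  have rel': "(\<Sum>i<k. a' i * int (multiplicity p (n i))) = 0" if "prime p" for p
  proof -
    have "g * (\<Sum>i<k. a' i * int (multiplicity p (n i))) = (\<Sum>i<k. \<alpha> i * int (multiplicity p (n i)))"
      by (auto simp: sum_distrib_left aa mult.assoc intro!: sum.cong)
    then show ?thesis using rel[OF that] g0 by simp
  qed
  define \<gamma> where "\<gamma> i = a' i mod int q" for i
  show ?thesis unfolding Fq_dependent_def
  proof (intro exI[of _ \<gamma>] conjI)
    show "\<forall>i<k. \<gamma> i \<in> {0..<int q}" using q by (auto simp: \<gamma>_def prime_gt_0_nat)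
    show "\<exists>i<k. \<gamma> i \<noteq> 0" using ex by (auto simp: \<gamma>_def)
    show "\<forall>v. (\<forall>p. v p \<in> {0..<int q}) \<longrightarrow> (\<Sum>i<k. \<gamma> i * Lform q (n i) v) mod int q = 0"
    proof (intro allI impI)
    fix v :: "nat \<Rightarrow> int"
    define P where "P = {p. prime p \<and> p < q}"
    define S where "S i = (\<Sum>p\<in>P. int (multiplicity p (n i)) * v p)" for i
    have "(\<Sum>i<k. \<gamma> i * Lform q (n i) v) mod int q = (\<Sum>i<k. (\<gamma> i * Lform q (n i) v) mod int q) mod int q"
      by (simp add: mod_sum_eq)
    also have "\<dots> = (\<Sum>i<k. (a' i * S i) mod int q) mod int q"
      unfolding \<gamma>_def Lform_def S_def P_def by (simp add: mod_mult_eq)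
    also have "\<dots> = (\<Sum>i<k. a' i * S i) mod int q"
      by (simp add: mod_sum_eq)
    also have "(\<Sum>i<k. a' i * S i) = (\<Sum>p\<in>P. v p * (\<Sum>i<k. a' i * int (multiplicity p (n i))))"
      unfolding S_def by (simp add: sum_distrib_left sum_distrib_right mult_ac sum.swap[of _ P])
    also have "\<dots> = 0" by (auto simp: P_def rel' intro!: sum.neutral)
    finally show "(\<Sum>i<k. \<gamma> i * Lform q (n i) v) mod int q = 0" by simp
  qed
  qed
qed



lemma ln2_ge: "ln (2::real) \<ge> 1/2"
proof -
  have "ln (1 + (-1/2::real)) \<le> -1/2" by (rule ln_add_one_self_le_self2) auto
  moreover have "ln (1 + (-1/2::real)) = - ln 2" by (simp add: ln_div)
  ultimately show ?thesis by simp
qed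

lemma ln2_le: "ln (2::real) \<le> 1"
proof -
  have "2 \<le> exp (1::real)" using exp_ge_add_one_self[of 1] by simp
  then have "ln 2 \<le> ln (exp (1::real))" by (subst ln_le_cancel_iff) auto
  then show ?thesis by simp
qed

lemma numeric:
  fixes q k :: nat and T :: real
  assumes k1: "k \<ge> 1" and kb: "real k < plog (real q) / (10 * plog2 (real q))"
    and T0: "0 \<le> T" and Tb: "T * ln 2 \<le> ln (real q)"
  shows "fact k * (T^2)^k < real q"
proof -
  define x where "x = ln (real q)"
  define y where "y = plog2 (real q)"
  have y2: "y \<ge> 2" unfolding y_def plog2_def plog_def by simp
  have "1 < plog (real q) / (10 * y)" using kb k1 unfolding y_def[symmetric] by linarith
  then have "10 * y < plog (real q)" using y2 by (simp add: less_divide_eq)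
  then have "plog (real q) > 20" using y2 by linarith
  then have x20: "x > 20" unfolding plog_def x_def by linarith
  have q0: "q > 0" using x20 unfolding x_def by (cases q) auto
  have ly: "ln x \<le> y" using x20 unfolding y_def plog2_def plog_def x_def by simp
  have lx0: "ln x > 0" using x20 by simp
  have ky: "real k * (10 * y) < x" using kb y2 unfolding y_def[symmetric] plog_def x_def[symmetric]
    using x20 by (simp add: pos_less_divide_eq)
  have k20: "real k * 20 \<le> real k * (10*y)" by (rule mult_left_mono) (use y2 in auto)
  have k4: "real k * (4*y) \<le> real k * (10*y)" by (rule mult_left_mono) (use y2 in auto)
  have kx: "real k \<le> x" using ky k20 by linarith
  have "T * (1/2) \<le> T * ln 2" using ln2_ge T0 by (rule mult_left_mono)
  then have Tx: "T \<le> 2 * x" using Tb unfolding x_def by linarith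
  have f1: "fact k \<le> real k ^ k" using fact_le_power[of k, where 'a=real] by simp
  have f2: "T^2 \<le> (2*x)^2" using Tx T0 by (rule power_mono)
  have f3: "(T^2)^k \<le> ((2*x)^2)^k" using f2 by (rule power_mono) simp
  have "fact k * (T^2)^k \<le> real k ^ k * ((2*x)^2)^k"
    using f1 f3 by (rule mult_mono) auto
  also have "\<dots> \<le> x ^ k * ((2*x)^2)^k"
    using kx by (intro mult_right_mono power_mono) auto
  also have "\<dots> = (4 * x^3)^k" by (simp add: power_mult_distrib[symmetric] power2_eq_square power3_eq_cube mult_ac)
  also have "\<dots> = exp (real k * ln (4 * x^3))"
    using x20 by (simp add: exp_of_nat_mult)
  also have "\<dots> < exp x"
  proof -
    have "ln (4 * x^3) = ln 4 + ln (x^3)" using x20 by (simp add: ln_mult)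
    also have "ln (4::real) = ln (2^2)" by simp
    also have "\<dots> = 2 * ln 2" by (subst ln_realpow) auto
    also have "ln (x^3) = 3 * ln x" using x20 by (subst ln_realpow) auto
    finally have "ln (4 * x^3) = 2 * ln 2 + 3 * ln x" .
    also have "\<dots> \<le> 4 * y" using ln2_le ly y2 by linarith
    finally have "real k * ln (4 * x^3) \<le> real k * (4 * y)" by (intro mult_left_mono) auto
    also have "\<dots> < x" using ky k4 by linarith
    finally show ?thesis by simp
  qed
  also have "\<dots> = real q" using q0 unfolding x_def by simp
  finally show ?thesis .
qed

lemma det_bound:
  fixes A :: "int mat"
  assumes A: "A \<in> carrier_mat n n" and B: "\<forall>i<n. \<forall>j<n. \<bar>A $$ (i,j)\<bar> \<le> b"
  shows "\<bar>det A\<bar> \<le> fact n * b ^ n"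
proof -
  let ?P = "{p. p permutes {0..<n}}"
  have "\<bar>det A\<bar> = \<bar>\<Sum>p\<in>?P. signof p * (\<Prod>i = 0..<n. A $$ (i, p i))\<bar>"
    using det_def'[OF A] by simp
  also have "\<dots> \<le> (\<Sum>p\<in>?P. \<bar>signof p * (\<Prod>i = 0..<n. A $$ (i, p i))\<bar>)"
    by (rule sum_abs)
  also have "\<dots> \<le> (\<Sum>p\<in>?P. b ^ n)"
  proof (rule sum_mono)
    fix p assume p: "p \<in> ?P"
    have "\<bar>signof p * (\<Prod>i = 0..<n. A $$ (i, p i))\<bar> = (\<Prod>i = 0..<n. \<bar>A $$ (i, p i)\<bar>)"
      by (simp add: abs_mult abs_prod sign_def)
    also have "\<dots> \<le> (\<Prod>i = 0..<n. b)"
    proof (rule prod_mono)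
      fix i assume i: "i \<in> {0..<n}"
      then have "p i \<in> {0..<n}" using p by (auto intro: permutes_in_image[THEN iffD2])
      then show "0 \<le> \<bar>A $$ (i, p i)\<bar> \<and> \<bar>A $$ (i, p i)\<bar> \<le> b" using B i by auto
    qed
    also have "\<dots> = b ^ n" by simp
    finally show "\<bar>signof p * (\<Prod>i = 0..<n. A $$ (i, p i))\<bar> \<le> b ^ n" .
  qed
  also have "\<dots> = fact n * b ^ n"
    using card_permutations[of "{0..<n}" n] by simp
  finally show ?thesis .
qed

lemma pow2_sum:
  fixes m q :: nat
  assumes m0: "0 < m" and mq: "m < q"
  shows "2 ^ (\<Sum>p\<in>{p. prime p \<and> p < q}. multiplicity p m) \<le> m"
proof -
  let ?P = "{p. prime p \<and> p < q}"
  have fin: "finite ?P" by auto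
  have sub: "prime_factors m \<subseteq> ?P"
  proof
    fix p assume "p \<in> prime_factors m"
    then have "prime p" "p dvd m" by auto
    then show "p \<in> ?P" using m0 mq dvd_imp_le[of p m] by auto
  qed
  have "m = (\<Prod>p\<in>prime_factors m. p ^ multiplicity p m)"
    using prod_prime_factors[of m] m0 by simp
  also have "\<dots> = (\<Prod>p\<in>?P. p ^ multiplicity p m)"
  proof (rule prod.mono_neutral_left[OF fin sub])
    show "\<forall>i\<in>?P - prime_factors m. i ^ multiplicity i m = 1"
      using m0 by (auto intro!: not_dvd_imp_multiplicity_0 simp: in_prime_factors_iff)
  qed
  finally have meq: "m = (\<Prod>p\<in>?P. p ^ multiplicity p m)" .
  have "2 ^ (\<Sum>p\<in>?P. multiplicity p m) = (\<Prod>p\<in>?P. (2::nat) ^ multiplicity p m)"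
    by (simp add: power_sum)
  also have "\<dots> \<le> (\<Prod>p\<in>?P. p ^ multiplicity p m)"
    by (rule prod_mono) (auto intro!: power_mono prime_ge_2_nat)
  finally show ?thesis using meq by simp
qed

lemma sum_prod_le:
  fixes a b :: "nat \<Rightarrow> nat"
  assumes "finite P"
  shows "(\<Sum>p\<in>P. a p * b p) \<le> (\<Sum>p\<in>P. a p) * (\<Sum>p\<in>P. b p)"
proof -
  have "(\<Sum>p\<in>P. a p * b p) \<le> (\<Sum>p\<in>P. a p * (\<Sum>p\<in>P. b p))"
    by (rule sum_mono) (intro mult_left_mono member_le_sum, auto simp: assms)
  also have "\<dots> = (\<Sum>p\<in>P. a p) * (\<Sum>p\<in>P. b p)" by (simp add: sum_distrib_right)
  finally show ?thesis .
qed

lemma gram_sq: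
  fixes v :: "nat \<Rightarrow> int" and e :: "nat \<Rightarrow> nat \<Rightarrow> int"
  shows "(\<Sum>p\<in>P. (\<Sum>i\<in>I. v i * e i p)^2) = (\<Sum>i\<in>I. v i * (\<Sum>j\<in>I. (\<Sum>p\<in>P. e i p * e j p) * v j))"
proof -
  have "(\<Sum>p\<in>P. (\<Sum>i\<in>I. v i * e i p)^2) = (\<Sum>p\<in>P. \<Sum>i\<in>I. \<Sum>j\<in>I. v i * e i p * (v j * e j p))"
    by (simp add: power2_eq_square sum_product)
  also have "\<dots> = (\<Sum>i\<in>I. \<Sum>j\<in>I. \<Sum>p\<in>P. v i * e i p * (v j * e j p))"
    by (simp add: sum.swap[of _ P])
  also have "\<dots> = (\<Sum>i\<in>I. v i * (\<Sum>j\<in>I. (\<Sum>p\<in>P. e i p * e j p) * v j))"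
    by (simp add: sum_distrib_left sum_distrib_right mult_ac)
  finally show ?thesis .
qed



lemma part_b:
  fixes q k :: nat and n :: "nat \<Rightarrow> nat"
  assumes q: "prime q" and kb: "real k < plog (real q) / (10 * plog2 (real q))"
    and nr: "\<forall>i<k. n i \<in> {2..q-1}" and fd: "Fq_dependent q k n"
  shows "mult_dependent k n"
proof (rule ccontr)
  assume nmd: "\<not> mult_dependent k n"
  obtain \<alpha> where aR: "\<forall>i<k. \<alpha> i \<in> {0..<int q}" and a0: "\<exists>i<k. \<alpha> i \<noteq> 0"
    and aL: "\<forall>v. (\<forall>p. v p \<in> {0..<int q}) \<longrightarrow> (\<Sum>i<k. \<alpha> i * Lform q (n i) v) mod int q = 0"
    using fd unfolding Fq_dependent_def by blast
  obtain i0 where i0: "i0 < k" "\<alpha> i0 \<noteq> 0" using a0 by blast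
  have k1: "k \<ge> 1" using i0 by simp
  define P where "P = {p. prime p \<and> p < q}"
  have finP: "finite P" unfolding P_def by auto
  define e where "e i p = int (multiplicity p (n i))" for i p
  have q2: "q \<ge> 2" using q prime_ge_2_nat by blast
  have npos: "n i > 0" "n i < q" if "i < k" for i using nr that q2 by auto
  have rel: "int q dvd (\<Sum>i<k. \<alpha> i * e i p)" if "p \<in> P" for p
  proof -
    define v where "v x = (if x = p then 1 else 0 :: int)" for x
    have "\<forall>x. v x \<in> {0..<int q}" using q2 by (auto simp: v_def)
    then have 1: "(\<Sum>i<k. \<alpha> i * Lform q (n i) v) mod int q = 0" using aL by blast
    have L: "Lform q (n i) v = e i p mod int q" for i
    proof -
      have "Lform q (n i) v = (\<Sum>x\<in>P. int (multiplicity x (n i)) * v x) mod int q"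
        by (simp add: Lform_def P_def)
      also have "(\<Sum>x\<in>P. int (multiplicity x (n i)) * v x) = (\<Sum>x\<in>P. if x = p then e i p else 0)"
        by (rule sum.cong) (auto simp: v_def e_def)
      also have "\<dots> = e i p" using that finP by simp
      finally show ?thesis .
    qed
    have "(\<Sum>i<k. \<alpha> i * e i p) mod int q = (\<Sum>i<k. (\<alpha> i * e i p) mod int q) mod int q"
      by (simp add: mod_sum_eq)
    also have "\<dots> = (\<Sum>i<k. (\<alpha> i * (e i p mod int q)) mod int q) mod int q"
      by (simp add: mod_mult_right_eq)
    also have "\<dots> = (\<Sum>i<k. \<alpha> i * Lform q (n i) v) mod int q"
      by (simp add: mod_sum_eq L)
    finally show ?thesis using 1 by (simp add: dvd_eq_mod_eq_0)
  qed
  define G where "G = mat k k (\<lambda>(i,j). \<Sum>p\<in>P. e i p * e j p)"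
  have Gc: "G \<in> carrier_mat k k" unfolding G_def by simp
  have Gij: "G $$ (i,j) = (\<Sum>p\<in>P. e i p * e j p)" if "i < k" "j < k" for i j
    using that unfolding G_def by simp
  have col: "int q dvd (\<Sum>i<k. \<alpha> i * G $$ (i,j))" if "j < k" for j
  proof -
    have "(\<Sum>i<k. \<alpha> i * G $$ (i,j)) = (\<Sum>i<k. \<Sum>p\<in>P. e j p * (\<alpha> i * e i p))"
      using that by (intro sum.cong refl) (simp add: Gij sum_distrib_left mult_ac)
    also have "\<dots> = (\<Sum>p\<in>P. \<Sum>i<k. e j p * (\<alpha> i * e i p))" by (rule sum.swap)
    also have "\<dots> = (\<Sum>p\<in>P. e j p * (\<Sum>i<k. \<alpha> i * e i p))" by (simp add: sum_distrib_left)
    also have "int q dvd \<dots>" by (rule dvd_sum) (use rel in auto)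
    finally show ?thesis .
  qed
  obtain adjG where adjG: "G * adjG = det G \<cdot>\<^sub>m 1\<^sub>m k" "adjG \<in> carrier_mat k k"
    using adj_mat[OF Gc] by blast
  have E: "(G * adjG) $$ (i, i0) = (if i = i0 then det G else 0)" if "i < k" for i
    by (subst adjG(1)) (use i0 that in simp)
  have "(\<Sum>i<k. \<alpha> i * (G * adjG) $$ (i, i0)) = (\<Sum>i<k. \<alpha> i * (if i = i0 then det G else 0))"
    using E by (intro sum.cong) auto
  also have "\<dots> = \<alpha> i0 * det G" using i0 by (simp add: if_distrib cong: if_cong)
  finally have e1: "\<alpha> i0 * det G = (\<Sum>i<k. \<alpha> i * (G * adjG) $$ (i, i0))" ..
  also have "\<dots> = (\<Sum>i<k. \<alpha> i * (\<Sum>j<k. G $$ (i,j) * adjG $$ (j, i0)))"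
    using adjG(2) Gc i0 by (intro sum.cong) (auto simp: scalar_prod_def lessThan_atLeast0)
  also have "\<dots> = (\<Sum>i<k. \<Sum>j<k. adjG $$ (j, i0) * (\<alpha> i * G $$ (i,j)))"
    by (intro sum.cong refl) (simp add: sum_distrib_left mult_ac)
  also have "\<dots> = (\<Sum>j<k. \<Sum>i<k. adjG $$ (j, i0) * (\<alpha> i * G $$ (i,j)))" by (rule sum.swap)
  also have "\<dots> = (\<Sum>j<k. adjG $$ (j, i0) * (\<Sum>i<k. \<alpha> i * G $$ (i,j)))"
    by (simp add: sum_distrib_left)
  also have "int q dvd \<dots>" by (rule dvd_sum) (use col in auto)
  finally have "int q dvd \<alpha> i0 * det G" .
  moreover have "\<not> int q dvd \<alpha> i0"
  proof
    assume "int q dvd \<alpha> i0"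
    then have "int q \<le> \<alpha> i0" using aR i0 by (intro zdvd_imp_le) auto
    then show False using aR i0 by auto
  qed
  moreover have "prime (int q)" using q by simp
  ultimately have qdet: "int q dvd det G" using prime_dvd_mult_iff by blast
  have dG: "det G \<noteq> 0"
  proof
    assume "det G = 0"
    then obtain v where v: "v \<in> carrier_vec k" "v \<noteq> 0\<^sub>v k" "G *\<^sub>v v = 0\<^sub>v k"
      using det_0_iff_vec_prod_zero[OF Gc] by blast
    have Gv: "(\<Sum>j<k. (\<Sum>p\<in>P. e i p * e j p) * v $ j) = 0" if "i < k" for i
    proof -
      have "(G *\<^sub>v v) $ i = 0" using v(3) that by simp
      then show ?thesis using that v(1) Gc by (simp add: scalar_prod_def lessThan_atLeast0 Gij)
    qed
    define w where "w p = (\<Sum>i<k. v $ i * e i p)" for p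
    have "(\<Sum>p\<in>P. (w p)^2) = (\<Sum>i<k. v $ i * (\<Sum>j<k. (\<Sum>p\<in>P. e i p * e j p) * v $ j))"
      unfolding w_def by (rule gram_sq)
    also have "\<dots> = 0" using Gv by simp
    finally have "(\<Sum>p\<in>P. (w p)^2) = 0" .
    then have w0: "\<forall>p\<in>P. w p = 0" using finP by (simp add: sum_nonneg_eq_0_iff)
    have allp: "(\<Sum>i<k. v $ i * int (multiplicity p (n i))) = 0" if "prime p" for p
    proof (cases "p < q")
      case True then show ?thesis using w0 that by (auto simp: w_def e_def P_def)
    next
      case False
      have "multiplicity p (n i) = 0" if "i < k" for i
      proof (rule not_dvd_imp_multiplicity_0)
        show "\<not> p dvd n i" using npos[OF that] False by (auto dest: dvd_imp_le)
      qed
      then show ?thesis by simp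
    qed
    obtain i1 where i1: "i1 < k" "v $ i1 \<noteq> 0" using v(1,2) by (auto simp: vec_eq_iff)
    have "(\<Prod>i<k. real (n i) powi (v $ i)) = 1"
      using mult_rel[of k n "\<lambda>i. v $ i"] npos allp by auto
    then have "mult_dependent k n" unfolding mult_dependent_def using i1 by blast
    then show False using nmd by contradiction
  qed
  define s where "s i = (\<Sum>p\<in>P. multiplicity p (n i))" for i
  define T where "T = Max (s ` {..<k})"
  have sT: "s i \<le> T" if "i < k" for i unfolding T_def using that by (intro Max_ge) auto
  have "T \<in> s ` {..<k}" unfolding T_def using i0 by (intro Max_in) auto
  then obtain i2 where i2: "i2 < k" "T = s i2" by auto
  have "2 ^ T \<le> n i2" using pow2_sum[OF npos[OF i2(1)]] i2 unfolding s_def P_def by simp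
  then have "2 ^ T < q" using npos[OF i2(1)] by simp
  then have "real (2 ^ T) < real q" by linarith
  then have "ln (2 ^ T) < ln (real q)" by (subst ln_less_cancel_iff) auto
  then have Tb: "real T * ln 2 \<le> ln (real q)" by (simp add: ln_realpow)
  have ent: "\<bar>G $$ (i,j)\<bar> \<le> int (T * T)" if "i < k" "j < k" for i j
  proof -
    define N where "N = (\<Sum>p\<in>P. multiplicity p (n i) * multiplicity p (n j))"
    have h0: "G $$ (i,j) = int N"
      using that by (simp add: Gij e_def N_def)
    have h1: "\<bar>G $$ (i,j)\<bar> = int N" unfolding h0 by simp
    have "N \<le> s i * s j"
      unfolding s_def N_def by (rule sum_prod_le[OF finP])
    also have "s i * s j \<le> T * T" using sT that by (intro mult_mono) auto
    finally have h2: "int N \<le> int (T * T)" by (simp only: of_nat_le_iff)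
    show ?thesis using h1 h2 by linarith
  qed
  have "\<bar>det G\<bar> \<le> fact k * int (T * T) ^ k"
    using det_bound[OF Gc] ent by blast
  moreover have "int q \<le> \<bar>det G\<bar>" using dvd_imp_le_int[OF dG qdet] by simp
  ultimately have "real_of_int (int q) \<le> real_of_int (fact k * int (T * T) ^ k)" by linarith
  then have "real q \<le> fact k * ((real T)^2) ^ k" by (simp add: power2_eq_square)
  moreover have "fact k * ((real T)^2) ^ k < real q"
    using numeric[OF k1 kb _ Tb] by simp
  ultimately show False by simp
qed


theorem lemma3p2:
  fixes q k :: nat and n :: "nat \<Rightarrow> nat"
  assumes "prime q"
  shows "((\<forall>i<k. n i \<in> {1..q-1}) \<and> mult_dependent k n \<longrightarrow> Fq_dependent q k n)
    \<and> (real k < plog (real q) / (10 * plog2 (real q)) \<and> (\<forall>i<k. n i \<in> {2..q-1}) \<longrightarrow>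
         (mult_independent k n \<longleftrightarrow> Fq_independent q k n))"
proof (intro conjI impI)
  assume "(\<forall>i<k. n i \<in> {1..q-1}) \<and> mult_dependent k n"
  then show "Fq_dependent q k n" using part_a[OF assms] by blast
next
  assume h: "real k < plog (real q) / (10 * plog2 (real q)) \<and> (\<forall>i<k. n i \<in> {2..q-1})"
  have r1: "\<forall>i<k. n i \<in> {1..q-1}" using h by auto
  show "mult_independent k n \<longleftrightarrow> Fq_independent q k n"
    unfolding mult_independent_def Fq_independent_def
    using part_a[OF assms r1] part_b[OF assms] h by blast
qed

end
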